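(* Let $G_1 \le G_2$ be groups. Then $\nu(G_1) \le \nu(G_2)$, and equality holds if $[G_2 : G_1] < \infty$.
   Context: For a group $G$, the free subgroup rank is $\nu(G) = \max\{ n \ge 0 : (F_2)^n \text{ embeds into } G\} \in \mathbb{N}_0 \cup \{\infty\}$, where $F_2$ is the free group of rank two and $(F_2)^n$ is the $n$-fold direct product. *)

theory Defs
  imports "HOL-Algebra.Algebra" "HOL-Library.Extended_Nat"
begin

text \<open>A letter is a pair (generator, exponent sign): generator False = a, True = b;
  sign True means the generator itself, False its inverse.\<close>

type_synonym f2_letter = "bool \<times> bool"

definition f2_inv_letter :: "f2_letter \<Rightarrow> f2_letter" where
  "f2_inv_letter x = (fst x, \<not> snd x)"

definition f2_reduced :: "f2_letter list \<Rightarrow> bool" where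
  "f2_reduced w \<longleftrightarrow> (\<forall>i. Suc i < length w \<longrightarrow> w ! Suc i \<noteq> f2_inv_letter (w ! i))"

text \<open>Free reduction via a stack (the stack holds the reduced word in reverse).\<close>
fun f2_push :: "f2_letter list \<Rightarrow> f2_letter \<Rightarrow> f2_letter list" where
  "f2_push [] x = [x]"
| "f2_push (y # s) x = (if y = f2_inv_letter x then s else x # y # s)"

definition f2_reduce :: "f2_letter list \<Rightarrow> f2_letter list" where
  "f2_reduce w = rev (foldl f2_push [] w)"

definition F2 :: "f2_letter list monoid" where
  "F2 = \<lparr> carrier = {w. f2_reduced w},
          monoid.mult = (\<lambda>u v. f2_reduce (u @ v)),
          one = [] \<rparr>"

definition F2_power :: "nat \<Rightarrow> (nat \<Rightarrow> f2_letter list) monoid" where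
  "F2_power n = product_group {..<n} (\<lambda>_. F2)"

definition F2_power_embeds :: "nat \<Rightarrow> ('a, 'b) monoid_scheme \<Rightarrow> bool" where
  "F2_power_embeds n G \<longleftrightarrow>
     (\<exists>h. h \<in> hom (F2_power n) G \<and> inj_on h (carrier (F2_power n)))"

text \<open>nu G = max {n. (F2)^n embeds in G} in N_0 extended by infinity
  (the set is nonempty and downward closed, so the max is the supremum).\<close>
definition free_subgroup_rank :: "('a, 'b) monoid_scheme \<Rightarrow> enat" where
  "free_subgroup_rank G = Sup {enat n | n. F2_power_embeds n G}"

end

theory Submission
  imports Defs
begin

definition phi :: "nat \<Rightarrow> f2_letter list \<Rightarrow> f2_letter list" where
  "phi N w = concat (map (\<lambda>x. replicate N x) w)"

lemma phi_simps[simp]: "phi N [] = []" "phi N (x # w) = replicate N x @ phi N w"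
  "phi N (u @ v) = phi N u @ phi N v"
  by (simp_all add: phi_def)

lemma inv_ne[simp]: "f2_inv_letter x \<noteq> x" "x \<noteq> f2_inv_letter x"
  by (auto simp: f2_inv_letter_def prod_eq_iff)

lemma inv_inv[simp]: "f2_inv_letter (f2_inv_letter x) = x"
  by (simp add: f2_inv_letter_def)

lemma inv_eq_iff: "(y = f2_inv_letter x) = (x = f2_inv_letter y)"
  by (auto simp: f2_inv_letter_def prod_eq_iff)

lemma push_rep_cons:
  "(t = [] \<or> hd t \<noteq> f2_inv_letter x) \<Longrightarrow> foldl f2_push t (replicate k x) = replicate k x @ t"
proof (induction k arbitrary: t)
  case 0 then show ?case by simp
next
  case (Suc k)
  have "f2_push t x = x # t" using Suc.prems by (cases t) auto
  then have "foldl f2_push t (replicate (Suc k) x) = foldl f2_push (x # t) (replicate k x)" by simp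
  also have "\<dots> = replicate k x @ x # t" using Suc.IH[of "x # t"] by simp
  finally show ?case by (simp add: replicate_app_Cons_same)
qed

lemma push_rep_cancel:
  "y = f2_inv_letter x \<Longrightarrow> foldl f2_push (replicate k y @ t) (replicate k x) = t"
proof (induction k)
  case 0 then show ?case by simp
next
  case (Suc k)
  have "foldl f2_push (replicate (Suc k) y @ t) (replicate (Suc k) x)
      = foldl f2_push (f2_push (y # (replicate k y @ t)) x) (replicate k x)" by simp
  also have "f2_push (y # (replicate k y @ t)) x = replicate k y @ t" using Suc.prems by simp
  finally show ?case using Suc by simp
qed

lemma push_phi:
  assumes "0 < N"
  shows "foldl f2_push (phi N s) (replicate N x) = phi N (f2_push s x)"
proof (cases s)
  case Nil then show ?thesis using push_rep_cons[of "[]" x N] by simp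
next
  case (Cons y s')
  show ?thesis
  proof (cases "y = f2_inv_letter x")
    case True then show ?thesis using Cons push_rep_cancel[OF True, of N "phi N s'"] by simp
  next
    case False
    have "hd (phi N s) = y" using Cons assms by (cases N) auto
    then have "foldl f2_push (phi N s) (replicate N x) = replicate N x @ phi N s"
      using push_rep_cons[of "phi N s" x N] False by simp
    then show ?thesis using Cons False by simp
  qed
qed

lemma fold_phi:
  assumes "0 < N"
  shows "foldl f2_push (phi N s) (phi N w) = phi N (foldl f2_push s w)"
  using assms by (induction w arbitrary: s) (simp_all add: push_phi)

lemma rev_phi: "rev (phi N w) = phi N (rev w)"
  by (induction w) simp_all

lemma reduce_phi: "0 < N \<Longrightarrow> f2_reduce (phi N w) = phi N (f2_reduce w)"
  unfolding f2_reduce_def using fold_phi[of N "[]" w] by (simp add: rev_phi)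

lemma red_Nil[simp]: "f2_reduced []" and red_single[simp]: "f2_reduced [x]"
  by (auto simp: f2_reduced_def)

lemma red_Cons2[simp]: "f2_reduced (x # y # w) \<longleftrightarrow> y \<noteq> f2_inv_letter x \<and> f2_reduced (y # w)"
proof
  assume a: "f2_reduced (x # y # w)"
  have "y \<noteq> f2_inv_letter x" using a[unfolded f2_reduced_def, rule_format, of 0] by simp
  moreover have "f2_reduced (y # w)" unfolding f2_reduced_def
  proof (intro allI impI)
    fix i assume "Suc i < length (y # w)"
    then show "(y # w) ! Suc i \<noteq> f2_inv_letter ((y # w) ! i)"
      using a[unfolded f2_reduced_def, rule_format, of "Suc i"] by simp
  qed
  ultimately show "y \<noteq> f2_inv_letter x \<and> f2_reduced (y # w)" by simp
next
  assume a: "y \<noteq> f2_inv_letter x \<and> f2_reduced (y # w)"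
  show "f2_reduced (x # y # w)" unfolding f2_reduced_def
  proof (intro allI impI)
    fix i assume i: "Suc i < length (x # y # w)"
    show "(x # y # w) ! Suc i \<noteq> f2_inv_letter ((x # y # w) ! i)"
    proof (cases i)
      case 0 then show ?thesis using a by simp
    next
      case (Suc j) then show ?thesis using a[THEN conjunct2, unfolded f2_reduced_def, rule_format, of j] i by simp
    qed
  qed
qed

lemma red_tl: "f2_reduced (x # w) \<Longrightarrow> f2_reduced w"
  by (cases w) auto

lemma fold_reduced:
  "f2_reduced w \<Longrightarrow> (s = [] \<or> w = [] \<or> hd s \<noteq> f2_inv_letter (hd w)) \<Longrightarrow> foldl f2_push s w = rev w @ s"
proof (induction w arbitrary: s)
  case Nil then show ?case by simp
next
  case (Cons x w)
  have p: "f2_push s x = x # s" using Cons.prems(2) by (cases s) auto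
  have "w = [] \<or> hd (x # s) \<noteq> f2_inv_letter (hd w)"
    using Cons.prems(1) by (cases w) (auto simp: inv_eq_iff)
  then have "foldl f2_push (x # s) w = rev w @ x # s" using Cons.IH red_tl[OF Cons.prems(1)] by blast
  then show ?case using p by simp
qed

lemma reduce_reduced: "f2_reduced w \<Longrightarrow> f2_reduce w = w"
  unfolding f2_reduce_def using fold_reduced[of w "[]"] by simp

lemma red_rep_app:
  "f2_reduced v \<Longrightarrow> (v = [] \<or> hd v \<noteq> f2_inv_letter x) \<Longrightarrow> f2_reduced (replicate k x @ v)"
proof (induction k)
  case 0 then show ?case by simp
next
  case (Suc k)
  show ?case
  proof (cases k)
    case 0 then show ?thesis using Suc.prems by (cases v) (auto simp: inv_eq_iff)
  next
    case (Suc k') then show ?thesis using Suc.IH Suc.prems by simp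
  qed
qed

lemma phi_reduced: "0 < N \<Longrightarrow> f2_reduced w \<Longrightarrow> f2_reduced (phi N w)"
proof (induction w)
  case Nil then show ?case by simp
next
  case (Cons x w)
  have r: "f2_reduced (phi N w)" using Cons red_tl by blast
  have "phi N w = [] \<or> hd (phi N w) \<noteq> f2_inv_letter x"
    using Cons.prems by (cases w; cases N) auto
  then show ?case using red_rep_app[OF r] by simp
qed

lemma phi_inj: "0 < N \<Longrightarrow> phi N u = phi N v \<Longrightarrow> u = v"
proof (induction u arbitrary: v)
  case Nil then show ?case by (cases v; cases N) auto
next
  case (Cons x u)
  then show ?case
  proof (cases v)
    case Nil then show ?thesis using Cons by (cases N) auto
  next
    case (Cons y v')
    have "x = y" using Cons \<open>phi N (x # u) = phi N v\<close> \<open>0 < N\<close> by (cases N) auto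
    then show ?thesis using Cons \<open>phi N (x # u) = phi N v\<close> \<open>0 < N\<close> Cons.IH[of v'] by simp
  qed
qed

lemma phi_hom: "0 < N \<Longrightarrow> phi N (f2_reduce (u @ v)) = f2_reduce (phi N u @ phi N v)"
  using reduce_phi[of N "u @ v"] by simp

lemma reduce_rep: "f2_reduce (replicate k x) = replicate k x"
  by (rule reduce_reduced, rule red_rep_app[where v="[]", simplified])


lemma subgroup_pow_closed: "group G \<Longrightarrow> subgroup H G \<Longrightarrow> g \<in> H \<Longrightarrow> g [^]\<^bsub>G\<^esub> (k::nat) \<in> H"
  by (induction k) (auto simp: subgroup.one_closed subgroup.m_closed)

lemma (in group) pow_in_H:
  assumes H: "subgroup H G" and fin: "finite (rcosets H)"
    and g: "g \<in> carrier G"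
  shows "g [^] (fact (card (rcosets H)) :: nat) \<in> H"
proof -
  have G: "group G" by (rule is_group)
  let ?M = "card (rcosets H)"
  let ?f = "\<lambda>i::nat. H #> g [^] i"
  have sub: "?f ` {0..?M} \<subseteq> rcosets H"
    using g H by (auto intro!: rcosetsI subgroup.subset)
  have "\<not> inj_on ?f {0..?M}"
  proof
    assume "inj_on ?f {0..?M}"
    from card_inj_on_le[OF this sub fin] show False by simp
  qed
  then obtain i j where ij: "i \<in> {0..?M}" "j \<in> {0..?M}" "i < j" "?f i = ?f j"
    unfolding inj_on_def by (metis linorder_neqE_nat)
  have "g [^] j \<in> H #> g [^] i" using ij(4) rcos_self[of "g [^] j" H] g H by simp
  then have "g [^] j \<otimes> inv (g [^] i) \<in> H"
    using subgroup.rcos_module_imp[OF H G, of "g [^] i"] g by simp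
  moreover have "g [^] j = g [^] (j - i) \<otimes> g [^] i"
    using ij(3) g by (simp add: nat_pow_mult)
  ultimately have d: "g [^] (j - i) \<in> H" using g by (simp add: m_assoc)
  have "(j - i) dvd (fact ?M :: nat)" using ij by (intro dvd_fact) auto
  then obtain k where k: "(fact ?M :: nat) = (j - i) * k" by blast
  have "g [^] ((j - i) * k) = (g [^] (j - i)) [^] k" using g by (simp add: nat_pow_pow)
  then show ?thesis using k subgroup_pow_closed[OF G H d, of k] by metis
qed

lemma F2P_mult: "x \<otimes>\<^bsub>F2_power n\<^esub> y = (\<lambda>i\<in>{..<n}. f2_reduce (x i @ y i))"
  by (simp add: F2_power_def product_group_def F2_def)

lemma F2P_one: "\<one>\<^bsub>F2_power n\<^esub> = (\<lambda>i\<in>{..<n}. [])"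
  by (simp add: F2_power_def product_group_def F2_def)

lemma F2P_carrier: "carrier (F2_power n) = (\<Pi>\<^sub>E i\<in>{..<n}. {w. f2_reduced w})"
  by (simp add: F2_power_def F2_def)

definition psi :: "nat \<Rightarrow> nat \<Rightarrow> (nat \<Rightarrow> f2_letter list) \<Rightarrow> (nat \<Rightarrow> f2_letter list)" where
  "psi N n x = (\<lambda>i\<in>{..<n}. phi N (x i))"

lemma psi_carrier: "0 < N \<Longrightarrow> x \<in> carrier (F2_power n) \<Longrightarrow> psi N n x \<in> carrier (F2_power n)"
  unfolding F2P_carrier psi_def PiE_iff by (simp add: phi_reduced)

lemma psi_mult: "0 < N \<Longrightarrow> psi N n (x \<otimes>\<^bsub>F2_power n\<^esub> y) = psi N n x \<otimes>\<^bsub>F2_power n\<^esub> psi N n y"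
  by (auto simp: F2P_mult psi_def phi_hom)

lemma psi_inj: "0 < N \<Longrightarrow> inj_on (psi N n) (carrier (F2_power n))"
proof (rule inj_onI)
  fix x y assume N: "0 < N" and x: "x \<in> carrier (F2_power n)" and y: "y \<in> carrier (F2_power n)"
    and e: "psi N n x = psi N n y"
  show "x = y"
  proof (rule PiE_ext)
    show "x \<in> (\<Pi>\<^sub>E i\<in>{..<n}. {w. f2_reduced w})" "y \<in> (\<Pi>\<^sub>E i\<in>{..<n}. {w. f2_reduced w})"
      using x y by (simp_all add: F2P_carrier)
    fix i assume "i \<in> {..<n}"
    then have "phi N (x i) = phi N (y i)" using fun_cong[OF e, of i] by (simp add: psi_def)
    then show "x i = y i" using phi_inj[OF N] by blast
  qed
qed

definition ee :: "nat \<Rightarrow> nat \<Rightarrow> f2_letter list \<Rightarrow> (nat \<Rightarrow> f2_letter list)" where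
  "ee n j u = (\<lambda>i\<in>{..<n}. if i = j then u else [])"

lemma ee_carrier: "f2_reduced u \<Longrightarrow> ee n j u \<in> carrier (F2_power n)"
  unfolding F2P_carrier ee_def PiE_iff by simp

lemma ee_mult: "ee n j u \<otimes>\<^bsub>F2_power n\<^esub> ee n j v = ee n j (f2_reduce (u @ v))"
  by (auto simp: ee_def F2P_mult f2_reduce_def)

lemma ee_Nil: "ee n j [] = \<one>\<^bsub>F2_power n\<^esub>"
  unfolding F2P_one ee_def by (rule restrict_ext) simp

context
  fixes G :: "('a, 'b) monoid_scheme" and H :: "'a set" and h and n :: nat and N :: nat
  assumes G: "group G" and H: "subgroup H G" and hh: "h \<in> hom (F2_power n) G"
    and N: "0 < N" and powH: "\<And>g. g \<in> carrier G \<Longrightarrow> g [^]\<^bsub>G\<^esub> N \<in> H"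
begin

lemma hcar: "x \<in> carrier (F2_power n) \<Longrightarrow> h x \<in> carrier G"
  using hh by (auto simp: hom_def)

lemma hmult: "x \<in> carrier (F2_power n) \<Longrightarrow> y \<in> carrier (F2_power n) \<Longrightarrow>
   h (x \<otimes>\<^bsub>F2_power n\<^esub> y) = h x \<otimes>\<^bsub>G\<^esub> h y"
  using hh by (auto simp: hom_def)

lemma one_car: "\<one>\<^bsub>F2_power n\<^esub> \<in> carrier (F2_power n)"
  by (auto simp: F2P_one F2P_carrier)

lemma h_one: "h \<one>\<^bsub>F2_power n\<^esub> = \<one>\<^bsub>G\<^esub>"
proof -
  interpret group G by (rule G)
  have "\<one>\<^bsub>F2_power n\<^esub> \<otimes>\<^bsub>F2_power n\<^esub> \<one>\<^bsub>F2_power n\<^esub> = \<one>\<^bsub>F2_power n\<^esub>"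
    by (auto simp: F2P_one F2P_mult f2_reduce_def)
  then have "h \<one>\<^bsub>F2_power n\<^esub> \<otimes>\<^bsub>G\<^esub> h \<one>\<^bsub>F2_power n\<^esub> = h \<one>\<^bsub>F2_power n\<^esub> \<otimes>\<^bsub>G\<^esub> \<one>\<^bsub>G\<^esub>"
    using hmult[OF one_car one_car] hcar[OF one_car] by simp
  then show ?thesis using hcar[OF one_car] l_cancel by blast
qed

lemma ee_rep: "h (ee n j (replicate k l)) = h (ee n j [l]) [^]\<^bsub>G\<^esub> k"
proof (induction k)
  case 0 then show ?case using h_one ee_Nil by simp
next
  case (Suc k)
  have "replicate (Suc k) l = f2_reduce (replicate k l @ [l])"
    using reduce_rep[of "Suc k" l] by (simp add: replicate_append_same)
  then have "ee n j (replicate (Suc k) l) = ee n j (replicate k l) \<otimes>\<^bsub>F2_power n\<^esub> ee n j [l]"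
    by (simp add: ee_mult)
  moreover have "f2_reduced (replicate k l)" using red_rep_app[of "[]" l k] by simp
  ultimately have "h (ee n j (replicate (Suc k) l)) = h (ee n j (replicate k l)) \<otimes>\<^bsub>G\<^esub> h (ee n j [l])"
    using hmult[OF ee_carrier ee_carrier] by simp
  then show ?case using Suc.IH by (simp add: nat_pow_Suc)
qed

lemma ee_phi_H: "f2_reduced w \<Longrightarrow> h (ee n j (phi N w)) \<in> H"
proof (induction w)
  case Nil then show ?case using h_one ee_Nil subgroup.one_closed[OF H] by simp
next
  case (Cons l w)
  have rw: "f2_reduced w" using Cons.prems red_tl by blast
  have "phi N (l # w) = f2_reduce (replicate N l @ phi N w)"
    using reduce_reduced[OF phi_reduced[OF N Cons.prems]] by simp
  then have "ee n j (phi N (l # w)) = ee n j (replicate N l) \<otimes>\<^bsub>F2_power n\<^esub> ee n j (phi N w)"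
    by (simp add: ee_mult)
  then have "h (ee n j (phi N (l # w))) = h (ee n j (replicate N l)) \<otimes>\<^bsub>G\<^esub> h (ee n j (phi N w))"
    using hmult[OF ee_carrier ee_carrier] red_rep_app[of "[]" l N]
      phi_reduced[OF N rw] by simp
  moreover have "h (ee n j (replicate N l)) \<in> H"
    using ee_rep powH hcar[OF ee_carrier[OF red_single]] by simp
  ultimately show ?case using Cons.IH[OF rw] subgroup.m_closed[OF H] by simp
qed

lemma psi_H:
  assumes x: "x \<in> carrier (F2_power n)"
  shows "h (psi N n x) \<in> H"
proof -
  define r where "r S = (\<lambda>i\<in>{..<n}. if i \<in> S then phi N (x i) else [])" for S
  have xr: "\<And>i. i < n \<Longrightarrow> f2_reduced (x i)" using x by (auto simp: F2P_carrier)
  have rc: "r S \<in> carrier (F2_power n)" for S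
    unfolding r_def F2P_carrier PiE_iff by (simp add: xr phi_reduced[OF N])
  have rS: "finite S \<Longrightarrow> S \<subseteq> {..<n} \<Longrightarrow> h (r S) \<in> H" for S
  proof (induction S rule: finite_induct)
    case empty
    have "r {} = \<one>\<^bsub>F2_power n\<^esub>" by (auto simp: r_def F2P_one)
    then show ?case using h_one subgroup.one_closed[OF H] by simp
  next
    case (insert j S)
    have jr: "f2_reduced (phi N (x j))" using insert.prems xr phi_reduced[OF N] by auto
    have "r (insert j S) = ee n j (phi N (x j)) \<otimes>\<^bsub>F2_power n\<^esub> r S"
    proof -
      have "\<And>i. i < n \<Longrightarrow> i \<in> S \<Longrightarrow> f2_reduce (phi N (x i)) = phi N (x i)"
        using xr phi_reduced[OF N] reduce_reduced by blast
      moreover have "f2_reduce [] = []" by (simp add: f2_reduce_def)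
      ultimately show ?thesis using insert.hyps(2) reduce_reduced[OF jr]
        unfolding r_def ee_def F2P_mult by (intro restrict_ext) auto
    qed
    then have "h (r (insert j S)) = h (ee n j (phi N (x j))) \<otimes>\<^bsub>G\<^esub> h (r S)"
      using hmult[OF ee_carrier[OF jr] rc] by simp
    moreover have "h (ee n j (phi N (x j))) \<in> H" using insert.prems by (intro ee_phi_H xr) simp
    moreover have "h (r S) \<in> H" using insert.prems insert.IH by simp
    ultimately show ?case using subgroup.m_closed[OF H] by simp
  qed
  have "r {..<n} = psi N n x" unfolding r_def psi_def by (intro restrict_ext) simp
  then show ?thesis using rS[of "{..<n}"] by simp
qed

end


lemma embeds_sub:
  assumes H: "subgroup H G" and e: "F2_power_embeds n (G\<lparr>carrier := H\<rparr>)"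
  shows "F2_power_embeds n G"
proof -
  obtain h where h: "h \<in> hom (F2_power n) (G\<lparr>carrier := H\<rparr>)" "inj_on h (carrier (F2_power n))"
    using e unfolding F2_power_embeds_def by blast
  have "h \<in> hom (F2_power n) G"
    using h(1) subgroup.subset[OF H] unfolding hom_def by auto
  then show ?thesis using h(2) unfolding F2_power_embeds_def by blast
qed

lemma embeds_sup:
  assumes G: "group G" and H: "subgroup H G" and fin: "finite (rcosets\<^bsub>G\<^esub> H)"
    and e: "F2_power_embeds n G"
  shows "F2_power_embeds n (G\<lparr>carrier := H\<rparr>)"
proof -
  obtain h where h: "h \<in> hom (F2_power n) G" "inj_on h (carrier (F2_power n))"
    using e unfolding F2_power_embeds_def by blast
  define N :: nat where "N = fact (card (rcosets\<^bsub>G\<^esub> H))"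
  have N: "0 < N" by (simp add: N_def)
  have powH: "\<And>g. g \<in> carrier G \<Longrightarrow> g [^]\<^bsub>G\<^esub> N \<in> H"
    unfolding N_def using group.pow_in_H[OF G H fin] by blast
  let ?f = "h \<circ> psi N n"
  have "?f \<in> hom (F2_power n) (G\<lparr>carrier := H\<rparr>)"
  proof -
    have "\<And>x. x \<in> carrier (F2_power n) \<Longrightarrow> ?f x \<in> H"
      using psi_H[OF G H h(1) N powH] by simp
    moreover have "\<And>x y. x \<in> carrier (F2_power n) \<Longrightarrow> y \<in> carrier (F2_power n) \<Longrightarrow>
       ?f (x \<otimes>\<^bsub>F2_power n\<^esub> y) = ?f x \<otimes>\<^bsub>G\<^esub> ?f y"
      using psi_mult[OF N] hmult[OF G H h(1) N powH] psi_carrier[OF N] by simp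
    ultimately show ?thesis unfolding hom_def by auto
  qed
  moreover have "inj_on ?f (carrier (F2_power n))"
  proof (rule comp_inj_on[OF psi_inj[OF N]])
    show "inj_on h (psi N n ` carrier (F2_power n))"
      using h(2) psi_carrier[OF N] by (meson image_subsetI inj_on_subset)
  qed
  ultimately show ?thesis unfolding F2_power_embeds_def by blast
qed

theorem lemma2p2:
  fixes G :: "('a, 'b) monoid_scheme" and H :: "'a set"
  assumes "group G" and "subgroup H G"
  shows "free_subgroup_rank (G\<lparr>carrier := H\<rparr>) \<le> free_subgroup_rank G \<and>
         (finite (rcosets\<^bsub>G\<^esub> H) \<longrightarrow>
           free_subgroup_rank (G\<lparr>carrier := H\<rparr>) = free_subgroup_rank G)"
proof
  show "free_subgroup_rank (G\<lparr>carrier := H\<rparr>) \<le> free_subgroup_rank G"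
    unfolding free_subgroup_rank_def
    by (rule Sup_subset_mono) (auto intro: embeds_sub[OF assms(2)])
next
  show "finite (rcosets\<^bsub>G\<^esub> H) \<longrightarrow>
           free_subgroup_rank (G\<lparr>carrier := H\<rparr>) = free_subgroup_rank G"
  proof
    assume fin: "finite (rcosets\<^bsub>G\<^esub> H)"
    have "{enat n | n. F2_power_embeds n (G\<lparr>carrier := H\<rparr>)} = {enat n | n. F2_power_embeds n G}"
      using embeds_sub[OF assms(2)] embeds_sup[OF assms fin] by blast
    then show "free_subgroup_rank (G\<lparr>carrier := H\<rparr>) = free_subgroup_rank G"
      unfolding free_subgroup_rank_def by simp
  qed
qed

end
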